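(* Let $n\le k$ be positive integers and $\mathcal{A}$ a finite $\sigma$-structure. Then $\mathbb{H}_{n,k}\mathcal{A}$ has an extended tree decomposition of width $k$ and arity $n$ which is structured (with respect to $n$ and $k$).
   Context: For $m\in\mathbb{N}$, $[m]=\{1,\dots,m\}$. $\mathbb{T}_k\mathcal{A}$ has universe the nonempty finite lists over $A\times[k]$; $\epsilon_{\mathcal{A}}(s)$ is the first component of the last pair of $s$; $(s_1,\dots,s_r)\in R^{\mathbb{T}_k\mathcal{A}}$ iff the $s_i$ are pairwise prefix-comparable, $(\epsilon_{\mathcal{A}}(s_1),\dots,\epsilon_{\mathcal{A}}(s_r))\in R^{\mathcal{A}}$, and whenever $s_i$ is a prefix of $s_j$ ending with $(a,p)$, no prefix of $s_j$ properly extending $s_i$ ends with a pair $(a',p)$. A list over $A\times[k]$ is basic if it has at most $n$ pairs with distinct pebble indices; $S_n(s)=[s]$ if $s$ is basic, else $S_n(s)=[a];S_n(t)$ with $s=a\cdot t$ and $a$ the longest basic prefix. For $p\in[k]$ and $S_n(s)=t;[s']$ ($s'$ the last block), $\alpha_n(s,p)=t;[s']$ if $|s'|=n$ or $p$ occurs in $s'$, else $t$. $[s;(a,i)]\approx_n[t;(b,j)]$ iff $a=b$ and $\alpha_n(s,i)=\alpha_n(t,j)$. $\mathbb{H}_{n,k}\mathcal{A}=\mathbb{T}_k\mathcal{A}/{\approx_n}$, where a tuple of classes is related iff some choice of representatives is related in $\mathbb{T}_k\mathcal{A}$. A tree is a poset $(T,\le)$ with a least element in which each down-set is linearly ordered;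 $t'$ is a child of $t$ if $t<t'$ with nothing strictly between. A tree decomposition $(T,B)$ of a structure $\mathcal{C}$: every element lies in some bag, $\{t: c\in B(t)\}$ is connected for each $c$, and every related tuple lies in some bag. An extended tree decomposition of $\mathcal{C}$ is $(T,\beta,\gamma)$ with $\beta,\gamma:T\to 2^C$ such that $(T,B)$ with $B=\beta\cup\gamma$ is a tree decomposition and $c\in\gamma(t)$, $c\in B(t')$ imply $t\le t'$. Width: $\max_t|\beta(t)|$. Arity: least $n'\le$ width such that (i) $t<t'$ implies $|\beta(t')\cap\gamma(t)|\le n'$, and (ii) every related tuple $\bar c$ lies in some $B(t)$ with $|\bar c\cap\gamma(t)|\le n'$. Structured (with respect to $n,k$): every element lies in some $\gamma(t)$; $\gamma(t)\ne\emptyset$ for all $t$; $\beta(t')\cap\gamma(t)\ne\emptyset$ for each child $t'$ of $t$; and for each child $t'$ of $t$ and child $t''$ of $t'$, at least one of: $|\beta(t')\cap\gamma(t)|=n$; $|\beta(t')|<k$; $(\gamma(t)\cap\beta(t'))\setminus\beta(t'')\ne\emptyset$. *)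

theory Defs
  imports Main "HOL-Library.Sublist"
begin

definition sig_struct :: "('r \<Rightarrow> nat) \<Rightarrow> 'a set \<Rightarrow> ('r \<Rightarrow> 'a list set) \<Rightarrow> bool" where
  "sig_struct ar U I \<longleftrightarrow> (\<forall>R. \<forall>xs\<in>I R. length xs = ar R \<and> set xs \<subseteq> U)"

definition Tuniv :: "nat \<Rightarrow> 'a set \<Rightarrow> ('a \<times> nat) list set" where
  "Tuniv k A = {s. s \<noteq> [] \<and> set s \<subseteq> A \<times> {1..k}}"

definition eps :: "('a \<times> nat) list \<Rightarrow> 'a" where
  "eps s = fst (last s)"

definition Trel :: "nat \<Rightarrow> 'a set \<Rightarrow> ('r \<Rightarrow> 'a list set) \<Rightarrow> 'r \<Rightarrow> ('a \<times> nat) list list set" where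
  "Trel k A I R = {ss. set ss \<subseteq> Tuniv k A \<and>
     (\<forall>x\<in>set ss. \<forall>y\<in>set ss. prefix x y \<or> prefix y x) \<and>
     map eps ss \<in> I R \<and>
     (\<forall>x\<in>set ss. \<forall>y\<in>set ss. prefix x y \<longrightarrow>
        (\<forall>u. prefix x u \<and> prefix u y \<and> u \<noteq> x \<longrightarrow> snd (last u) \<noteq> snd (last x)))}"

definition basic :: "nat \<Rightarrow> ('a \<times> nat) list \<Rightarrow> bool" where
  "basic n s \<longleftrightarrow> length s \<le> n \<and> distinct (map snd s)"

definition lbp :: "nat \<Rightarrow> ('a \<times> nat) list \<Rightarrow> ('a \<times> nat) list" where
  "lbp n s = take (GREATEST m. m \<le> length s \<and> basic n (take m s)) s"

text \<open>S_n. The guard "lbp n s = []" can only fire for n = 0 (for n \<ge> 1 every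
  singleton is basic); it only serves to make the function total.\<close>
function blocks :: "nat \<Rightarrow> ('a \<times> nat) list \<Rightarrow> ('a \<times> nat) list list" where
  "blocks n s = (if basic n s then [s]
                 else if lbp n s = [] then [s]
                 else lbp n s # blocks n (drop (length (lbp n s)) s))"
  by pat_completeness auto
termination
  by (relation "measure (\<lambda>(n, s). length s)") (auto simp: lbp_def basic_def)

definition alpha :: "nat \<Rightarrow> ('a \<times> nat) list \<Rightarrow> nat \<Rightarrow> ('a \<times> nat) list list" where
  "alpha n s p = (let B = blocks n s; s' = last B in
     if length s' = n \<or> p \<in> snd ` set s' then B else butlast B)"

definition approx :: "nat \<Rightarrow> ('a \<times> nat) list \<Rightarrow> ('a \<times> nat) list \<Rightarrow> bool" where
  "approx n x y \<longleftrightarrow> x \<noteq> [] \<and> y \<noteq> [] \<and> fst (last x) = fst (last y) \<and>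
     alpha n (butlast x) (snd (last x)) = alpha n (butlast y) (snd (last y))"

definition Heq :: "nat \<Rightarrow> nat \<Rightarrow> 'a set \<Rightarrow> (('a \<times> nat) list \<times> ('a \<times> nat) list) set" where
  "Heq n k A = {(x, y). x \<in> Tuniv k A \<and> y \<in> Tuniv k A \<and> approx n x y}"

definition Huniv :: "nat \<Rightarrow> nat \<Rightarrow> 'a set \<Rightarrow> ('a \<times> nat) list set set" where
  "Huniv n k A = Tuniv k A // Heq n k A"

definition Hrel :: "nat \<Rightarrow> nat \<Rightarrow> 'a set \<Rightarrow> ('r \<Rightarrow> 'a list set) \<Rightarrow> 'r
                    \<Rightarrow> ('a \<times> nat) list set list set" where
  "Hrel n k A I R = {cs. set cs \<subseteq> Huniv n k A \<and>
      (\<exists>ss\<in>Trel k A I R. list_all2 (\<in>) ss cs)}"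

definition is_tree :: "'t set \<Rightarrow> ('t \<Rightarrow> 't \<Rightarrow> bool) \<Rightarrow> bool" where
  "is_tree T le \<longleftrightarrow>
     (\<forall>x\<in>T. le x x) \<and>
     (\<forall>x\<in>T. \<forall>y\<in>T. le x y \<and> le y x \<longrightarrow> x = y) \<and>
     (\<forall>x\<in>T. \<forall>y\<in>T. \<forall>z\<in>T. le x y \<and> le y z \<longrightarrow> le x z) \<and>
     (\<exists>r\<in>T. \<forall>t\<in>T. le r t) \<and>
     (\<forall>t\<in>T. \<forall>x\<in>T. \<forall>y\<in>T. le x t \<and> le y t \<longrightarrow> le x y \<or> le y x)"

definition tree_less :: "('t \<Rightarrow> 't \<Rightarrow> bool) \<Rightarrow> 't \<Rightarrow> 't \<Rightarrow> bool" where
  "tree_less le x y \<longleftrightarrow> le x y \<and> x \<noteq> y"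

definition tree_child :: "'t set \<Rightarrow> ('t \<Rightarrow> 't \<Rightarrow> bool) \<Rightarrow> 't \<Rightarrow> 't \<Rightarrow> bool" where
  "tree_child T le t t' \<longleftrightarrow> t \<in> T \<and> t' \<in> T \<and> tree_less le t t' \<and>
     \<not> (\<exists>u\<in>T. tree_less le t u \<and> tree_less le u t')"

definition tree_connected :: "'t set \<Rightarrow> ('t \<Rightarrow> 't \<Rightarrow> bool) \<Rightarrow> 't set \<Rightarrow> bool" where
  "tree_connected T le S \<longleftrightarrow> S \<subseteq> T \<and>
     (\<forall>x\<in>S. \<forall>y\<in>S. (x, y) \<in>
        {(u, v). u \<in> S \<and> v \<in> S \<and> (tree_child T le u v \<or> tree_child T le v u)}\<^sup>*)"

definition tree_decomp :: "'c set \<Rightarrow> ('r \<Rightarrow> 'c list set) \<Rightarrow> 't set \<Rightarrow> ('t \<Rightarrow> 't \<Rightarrow> bool)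
                           \<Rightarrow> ('t \<Rightarrow> 'c set) \<Rightarrow> bool" where
  "tree_decomp C I T le B \<longleftrightarrow> is_tree T le \<and>
     (\<forall>t\<in>T. B t \<subseteq> C) \<and>
     (\<forall>c\<in>C. \<exists>t\<in>T. c \<in> B t) \<and>
     (\<forall>c\<in>C. tree_connected T le {t\<in>T. c \<in> B t}) \<and>
     (\<forall>R. \<forall>cs\<in>I R. \<exists>t\<in>T. set cs \<subseteq> B t)"

definition ext_tree_decomp :: "'c set \<Rightarrow> ('r \<Rightarrow> 'c list set) \<Rightarrow> 't set \<Rightarrow> ('t \<Rightarrow> 't \<Rightarrow> bool)
                           \<Rightarrow> ('t \<Rightarrow> 'c set) \<Rightarrow> ('t \<Rightarrow> 'c set) \<Rightarrow> bool" where
  "ext_tree_decomp C I T le \<beta> \<gamma> \<longleftrightarrow>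
     (\<forall>t\<in>T. \<beta> t \<subseteq> C \<and> \<gamma> t \<subseteq> C) \<and>
     tree_decomp C I T le (\<lambda>t. \<beta> t \<union> \<gamma> t) \<and>
     (\<forall>t\<in>T. \<forall>t'\<in>T. \<forall>c. c \<in> \<gamma> t \<and> c \<in> \<beta> t' \<union> \<gamma> t' \<longrightarrow> le t t')"

text \<open>Width: max over nodes of |beta(t)| (meaningful when all beta-bags are finite
  of bounded size).\<close>
definition etd_width :: "'t set \<Rightarrow> ('t \<Rightarrow> 'c set) \<Rightarrow> nat" where
  "etd_width T \<beta> = Max ((\<lambda>t. card (\<beta> t)) ` T)"

definition etd_width_le :: "'t set \<Rightarrow> ('t \<Rightarrow> 'c set) \<Rightarrow> nat \<Rightarrow> bool" where
  "etd_width_le T \<beta> k \<longleftrightarrow> (\<forall>t\<in>T. finite (\<beta> t) \<and> card (\<beta> t) \<le> k)"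

definition arity_cond :: "'t set \<Rightarrow> ('t \<Rightarrow> 't \<Rightarrow> bool) \<Rightarrow> ('t \<Rightarrow> 'c set) \<Rightarrow> ('t \<Rightarrow> 'c set)
                          \<Rightarrow> ('r \<Rightarrow> 'c list set) \<Rightarrow> nat \<Rightarrow> bool" where
  "arity_cond T le \<beta> \<gamma> I m \<longleftrightarrow>
     (\<forall>t\<in>T. \<forall>t'\<in>T. tree_less le t t' \<longrightarrow> card (\<beta> t' \<inter> \<gamma> t) \<le> m) \<and>
     (\<forall>R. \<forall>cs\<in>I R. \<exists>t\<in>T. set cs \<subseteq> \<beta> t \<union> \<gamma> t \<and> card (set cs \<inter> \<gamma> t) \<le> m)"

text \<open>arity at most n: the least m \<le> width satisfying (i),(ii) exists and is \<le> n\<close>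
definition etd_arity_le :: "'t set \<Rightarrow> ('t \<Rightarrow> 't \<Rightarrow> bool) \<Rightarrow> ('t \<Rightarrow> 'c set) \<Rightarrow> ('t \<Rightarrow> 'c set)
                          \<Rightarrow> ('r \<Rightarrow> 'c list set) \<Rightarrow> nat \<Rightarrow> bool" where
  "etd_arity_le T le \<beta> \<gamma> I n \<longleftrightarrow>
     (\<exists>m\<le>n. m \<le> etd_width T \<beta> \<and> arity_cond T le \<beta> \<gamma> I m)"

definition structured :: "nat \<Rightarrow> nat \<Rightarrow> 'c set \<Rightarrow> 't set \<Rightarrow> ('t \<Rightarrow> 't \<Rightarrow> bool)
                          \<Rightarrow> ('t \<Rightarrow> 'c set) \<Rightarrow> ('t \<Rightarrow> 'c set) \<Rightarrow> bool" where
  "structured n k C T le \<beta> \<gamma> \<longleftrightarrow>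
     (\<forall>c\<in>C. \<exists>t\<in>T. c \<in> \<gamma> t) \<and>
     (\<forall>t\<in>T. \<gamma> t \<noteq> {}) \<and>
     (\<forall>t t'. tree_child T le t t' \<longrightarrow> \<beta> t' \<inter> \<gamma> t \<noteq> {}) \<and>
     (\<forall>t t' t''. tree_child T le t t' \<and> tree_child T le t' t'' \<longrightarrow>
        card (\<beta> t' \<inter> \<gamma> t) = n \<or> card (\<beta> t') < k \<or> (\<gamma> t \<inter> \<beta> t') - \<beta> t'' \<noteq> {})"

end

theory Submission
  imports Defs
begin

declare blocks.simps[simp del]

definition vb :: "nat \<Rightarrow> ('a \<times> nat) list list \<Rightarrow> bool" where
 "vb n P \<longleftrightarrow> (\<forall>b\<in>set P. b \<noteq> [] \<and> basic n b) \<and>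
    (\<forall>j. Suc j < length P \<longrightarrow> \<not> basic n (P!j @ [hd (P!Suc j)]))"

lemma basic_take: "basic n b \<Longrightarrow> basic n (take m b)"
  by (auto simp: basic_def take_map[symmetric] distinct_take)

lemma vb_Nil[simp]: "vb n []" by (simp add: vb_def)

lemma vb_Cons: "vb n (b#Q) \<longleftrightarrow> b \<noteq> [] \<and> basic n b \<and> vb n Q \<and> (Q \<noteq> [] \<longrightarrow> \<not> basic n (b @ [hd (hd Q)]))"
proof -
  have "(\<forall>j. Suc j < length (b#Q) \<longrightarrow> \<not> basic n ((b#Q)!j @ [hd ((b#Q)!Suc j)]))
     \<longleftrightarrow> (Q \<noteq> [] \<longrightarrow> \<not> basic n (b @ [hd (hd Q)])) \<and> (\<forall>j. Suc j < length Q \<longrightarrow> \<not> basic n (Q!j @ [hd (Q!Suc j)]))"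
    (is "?L \<longleftrightarrow> ?R")
  proof
    assume L: ?L
    show ?R
    proof
      show "Q \<noteq> [] \<longrightarrow> \<not> basic n (b @ [hd (hd Q)])" using L[rule_format, of 0] by (cases Q) auto
      show "\<forall>j. Suc j < length Q \<longrightarrow> \<not> basic n (Q!j @ [hd (Q!Suc j)])" using L[rule_format, of "Suc _"] by auto
    qed
  next
    assume R: ?R
    show ?L
    proof (intro allI impI)
      fix j assume "Suc j < length (b#Q)"
      then show "\<not> basic n ((b#Q)!j @ [hd ((b#Q)!Suc j)])"
        using R by (cases j) (auto simp: hd_conv_nth)
    qed
  qed
  then show ?thesis by (auto simp: vb_def)
qed

lemma vb_take: "vb n P \<Longrightarrow> vb n (take j P)"
  unfolding vb_def by (auto dest: in_set_takeD)

lemma vb_butlast: "vb n P \<Longrightarrow> vb n (butlast P)"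
  using vb_take[of n P "length P - 1"] by (simp add: butlast_conv_take)

lemma vb_snoc_repl: "vb n (P @ [b]) \<Longrightarrow> c \<noteq> [] \<Longrightarrow> basic n c \<Longrightarrow> hd c = hd b \<Longrightarrow> vb n (P @ [c])"
  unfolding vb_def
  apply (intro conjI)
   apply auto[1]
  apply (intro allI impI)
  subgoal for j
    apply (cases "Suc j < length P")
     apply (drule conjunct2, drule spec[of _ j])
     apply (simp add: nth_append)
    apply (drule conjunct2, drule spec[of _ j])
    apply (simp add: nth_append)
    done
  done

lemma vb_snoc: "vb n P \<Longrightarrow> c \<noteq> [] \<Longrightarrow> basic n c \<Longrightarrow> (P \<noteq> [] \<Longrightarrow> \<not> basic n (last P @ [hd c])) \<Longrightarrow> vb n (P @ [c])"
  unfolding vb_def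
  apply (intro conjI)
   apply auto[1]
  apply (intro allI impI)
  subgoal for j
    apply (cases "Suc j < length P")
     apply (simp add: nth_append)
    apply (cases P rule: rev_cases)
     apply (auto simp add: nth_append last_conv_nth)
    done
  done

lemma vb_aux: "vb n (b#P) \<Longrightarrow> vb n (c#Q) \<Longrightarrow> b @ concat P = c @ concat Q \<Longrightarrow> length b < length c \<Longrightarrow> False"
proof -
  assume v1: "vb n (b#P)" and v2: "vb n (c#Q)" and e: "b @ concat P = c @ concat Q" and l: "length b < length c"
  have "P \<noteq> []"
  proof
    assume "P = []"
    with e have "length b = length (c @ concat Q)" by simp
    with l show False by simp
  qed
  then obtain b2 P' where P: "P = b2 # P'" by (cases P) auto
  have b2: "b2 \<noteq> []" using v1 P by (simp add: vb_Cons)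
  have nb: "\<not> basic n (b @ [hd b2])" using v1 P by (simp add: vb_Cons)
  have "b @ [hd b2] = take (Suc (length b)) (b @ concat P)"
    using b2 P by (cases b2) auto
  also have "\<dots> = take (Suc (length b)) (c @ concat Q)" using e by simp
  also have "\<dots> = take (Suc (length b)) c" using l by simp
  finally have "basic n (b @ [hd b2])" using v2 basic_take by (metis vb_Cons)
  with nb show False by simp
qed

lemma vb_unique: "vb n P \<Longrightarrow> vb n Q \<Longrightarrow> concat P = concat Q \<Longrightarrow> P = Q"
proof (induction P arbitrary: Q)
  case Nil
  then show ?case by (cases Q) (auto simp: vb_Cons)
next
  case (Cons b P)
  then obtain c Q' where Q: "Q = c # Q'" by (cases Q) (auto simp: vb_Cons)
  have "length b = length c"
    using vb_aux[of n b P c Q'] vb_aux[of n c Q' b P] Cons.prems Q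
    by (metis concat.simps(2) linorder_neqE_nat)
  then have "b = c" "concat P = concat Q'" using Cons.prems Q by auto
  then show ?case using Cons Q by (auto simp: vb_Cons)
qed

lemma blocks_ne[simp]: "blocks n s \<noteq> []"
  by (subst blocks.simps) auto

lemma blocks_vb: "0 < n \<Longrightarrow> s \<noteq> [] \<Longrightarrow> vb n (blocks n s) \<and> concat (blocks n s) = s"
proof (induction n s rule: blocks.induct)
  case (1 n s)
  show ?case
  proof (cases "basic n s")
    case True
    then have "blocks n s = [s]" by (subst blocks.simps) simp
    then show ?thesis using 1 True by (simp add: vb_def)
  next
    case False
    define m where "m = (GREATEST m. m \<le> length s \<and> basic n (take m s))"
    have ex1: "1 \<le> length s \<and> basic n (take 1 s)" using 1 by (cases s) (auto simp: basic_def)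
    have bnd: "\<forall>y. y \<le> length s \<and> basic n (take y s) \<longrightarrow> y \<le> length s" by simp
    have m1: "m \<le> length s \<and> basic n (take m s)"
      unfolding m_def by (rule GreatestI_nat[where P="\<lambda>m. m \<le> length s \<and> basic n (take m s)", OF ex1]) (use bnd in blast)
    have mge: "1 \<le> m" unfolding m_def by (rule Greatest_le_nat[where P="\<lambda>m. m \<le> length s \<and> basic n (take m s)", OF ex1]) (use bnd in blast)
    have lbp: "lbp n s = take m s" by (simp add: lbp_def m_def)
    have ml: "m < length s" using m1 False by (metis le_neq_implies_less take_all_iff)
    have nb: "\<not> basic n (take (Suc m) s)"
    proof
      assume bb: "basic n (take (Suc m) s)"
      have "Suc m \<le> m"
        using Greatest_le_nat[where P="\<lambda>m. m \<le> length s \<and> basic n (take m s)", of "Suc m" "length s"] ml bb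
        unfolding m_def[symmetric] by auto
      then show False by simp
    qed
    have lbpne: "lbp n s \<noteq> []" using lbp mge ml by (cases s) auto
    have len: "length (lbp n s) = m" using lbp ml by simp
    have dne: "drop m s \<noteq> []" using ml by simp
    have IH: "vb n (blocks n (drop m s)) \<and> concat (blocks n (drop m s)) = drop m s"
      using "1.IH"[OF False lbpne] 1(2) dne len by simp
    have eq: "blocks n s = take m s # blocks n (drop m s)"
      using False lbpne lbp len by (subst blocks.simps) simp
    obtain c R where cR: "blocks n (drop m s) = c # R" by (cases "blocks n (drop m s)") auto
    have cne: "c \<noteq> []" using IH cR by (simp add: vb_Cons)
    have hdc: "hd c = hd (drop m s)" using IH cR cne by (metis concat.simps(2) hd_append2)
    have "take (Suc m) s = take m s @ [hd (drop m s)]" using ml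
      by (simp add: take_Suc_conv_app_nth hd_drop_conv_nth)
    then have "\<not> basic n (take m s @ [hd c])" using nb hdc by simp
    then show ?thesis using eq cR IH m1 mge ml by (auto simp: vb_Cons)
  qed
qed

lemma blocks_char: "0 < n \<Longrightarrow> vb n P \<Longrightarrow> P \<noteq> [] \<Longrightarrow> blocks n (concat P) = P"
proof -
  assume n: "0 < n" and v: "vb n P" and ne: "P \<noteq> []"
  have "concat P \<noteq> []" using v ne by (cases P) (auto simp: vb_Cons)
  then show ?thesis using blocks_vb[OF n] vb_unique[OF _ v] by metis
qed

lemma alpha_eq: assumes n: "0 < n" and x: "x \<noteq> []"
  shows "alpha n (butlast x) (snd (last x)) = butlast (blocks n x)"
proof -
  obtain s a i where xs: "x = s @ [(a,i)]" using x by (metis rev_exhaust surj_pair)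
  show ?thesis
  proof (cases "s = []")
    case True
    have b0: "blocks n s = [[]]" using True by (subst blocks.simps) (simp add: basic_def)
    have b1: "blocks n [(a,i)] = [[(a,i)]]" using n by (subst blocks.simps) (simp add: basic_def)
    show ?thesis using True xs b0 b1 n by (simp add: alpha_def Let_def)
  next
    case False
    define P where "P = blocks n s"
    have vP: "vb n P" and cP: "concat P = s" using blocks_vb[OF n False] P_def by auto
    have Pne: "P \<noteq> []" using P_def by simp
    obtain P0 b where Pb: "P = P0 @ [b]" using Pne by (metis rev_exhaust)
    have bb: "basic n b" "b \<noteq> []" using vP Pb by (auto simp: vb_def)
    show ?thesis
    proof (cases "basic n (b @ [(a,i)])")
      case True
      have v: "vb n (P0 @ [b @ [(a,i)]])"
        using vb_snoc_repl[of n P0 b "b @ [(a,i)]"] vP Pb True bb by simp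
      have "blocks n x = P0 @ [b @ [(a,i)]]"
      proof -
        have "x = concat (P0 @ [b @ [(a,i)]])" using xs cP Pb by simp
        then show ?thesis using blocks_char[OF n v] by simp
      qed
      moreover have "\<not> (length b = n \<or> i \<in> snd ` set b)" using True by (auto simp: basic_def)
      ultimately show ?thesis using xs Pb by (simp add: alpha_def Let_def P_def[symmetric])
    next
      case nb: False
      have v: "vb n (P @ [[(a,i)]])"
        using vb_snoc[OF vP, of "[(a,i)]"] Pb nb n by (simp add: basic_def)
      have "blocks n x = P @ [[(a,i)]]"
        using blocks_char[OF n v] xs cP by simp
      moreover have "length b = n \<or> i \<in> snd ` set b"
        using nb bb by (auto simp: basic_def)
      ultimately show ?thesis using xs Pb by (simp add: alpha_def Let_def P_def[symmetric] butlast_append)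
    qed
  qed
qed

definition Lp :: "'b list list \<Rightarrow> nat \<Rightarrow> nat" where
  "Lp P j = length (concat (take j P))"

lemma Lp_Suc: "j < length P \<Longrightarrow> Lp P (Suc j) = Lp P j + length (P!j)"
  by (simp add: Lp_def take_Suc_conv_app_nth)

lemma Lp_mono: "j \<le> j' \<Longrightarrow> Lp P j \<le> Lp P j'"
proof -
  assume "j \<le> j'"
  then have "take j P = take j (take j' P)" by (simp add: min_def)
  then have "prefix (take j P) (take j' P)" by (metis take_is_prefix)
  then have "prefix (concat (take j P)) (concat (take j' P))"
    by (metis concat_append prefix_def)
  then show ?thesis by (simp add: Lp_def prefix_length_le)
qed

lemma Lp_len: "Lp P (length P) = length (concat P)" by (simp add: Lp_def)

lemma Lp_ex: "1 \<le> l \<Longrightarrow> l \<le> length (concat P) \<Longrightarrow> \<exists>j<length P. Lp P j < l \<and> l \<le> Lp P (Suc j)"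
proof (induction P arbitrary: l)
  case Nil then show ?case by simp
next
  case (Cons b P)
  show ?case
  proof (cases "l \<le> length b")
    case True
    then show ?thesis using Cons.prems by (intro exI[of _ 0]) (simp add: Lp_def)
  next
    case False
    then obtain j where j: "j < length P" "Lp P j < l - length b" "l - length b \<le> Lp P (Suc j)"
      using Cons.IH[of "l - length b"] Cons.prems by fastforce
    have "Lp (b#P) (Suc j) = length b + Lp P j" "Lp (b#P) (Suc (Suc j)) = length b + Lp P (Suc j)"
      by (simp_all add: Lp_def)
    then show ?thesis using j False by (intro exI[of _ "Suc j"]) auto
  qed
qed

lemma concat_take_Lp: "j < length P \<Longrightarrow> Lp P j < l \<Longrightarrow> l \<le> Lp P (Suc j) \<Longrightarrow>
   take l (concat P) = concat (take j P) @ take (l - Lp P j) (P!j)"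
proof -
  assume j: "j < length P" and l1: "Lp P j < l" and l2: "l \<le> Lp P (Suc j)"
  have "concat P = concat (take j P) @ P!j @ concat (drop (Suc j) P)"
    using j by (metis append_take_drop_id concat.simps(2) concat_append Cons_nth_drop_Suc)
  moreover have "l - Lp P j \<le> length (P!j)" using l2 Lp_Suc[OF j] by simp
  ultimately show ?thesis using l1 by (simp add: Lp_def)
qed

lemma blocks_take: assumes n: "0 < n" and v: "vb n P" and j: "j < length P"
  and l1: "Lp P j < l" and l2: "l \<le> Lp P (Suc j)"
  shows "blocks n (take l (concat P)) = take j P @ [take (l - Lp P j) (P!j)]"
proof -
  define c where "c = take (l - Lp P j) (P!j)"
  have Pj: "P!j \<noteq> []" "basic n (P!j)" using v j by (auto simp: vb_def)
  have cne: "c \<noteq> []" using Pj l1 c_def by simp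
  have v1: "vb n (take j P @ [P!j])" using vb_take[OF v, of "Suc j"] j by (simp add: take_Suc_conv_app_nth)
  have v2: "vb n (take j P @ [c])"
    using vb_snoc_repl[OF v1 cne] basic_take[OF Pj(2)] c_def cne by (simp add: hd_take)
  show ?thesis using blocks_char[OF n v2] concat_take_Lp[OF j l1 l2] c_def by simp
qed

lemma bprefix: assumes n: "0 < n" and v: "vb n P" and l: "1 \<le> l" "l \<le> length (concat P)"
  shows "\<exists>j<length P. Lp P j < l \<and> l \<le> Lp P (Suc j) \<and> butlast (blocks n (take l (concat P))) = take j P"
  using Lp_ex[OF l] blocks_take[OF n v] by fastforce

definition key :: "nat \<Rightarrow> ('a \<times> nat) list \<Rightarrow> 'a \<times> ('a \<times> nat) list list" where
  "key n x = (fst (last x), butlast (blocks n x))"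

lemma approx_key: "0 < n \<Longrightarrow> approx n x y \<longleftrightarrow> x \<noteq> [] \<and> y \<noteq> [] \<and> key n x = key n y"
  by (auto simp: approx_def key_def alpha_eq)

definition cls :: "nat \<Rightarrow> nat \<Rightarrow> 'a set \<Rightarrow> ('a \<times> nat) list \<Rightarrow> ('a \<times> nat) list set" where
  "cls n k A x = Heq n k A `` {x}"

lemma cls_eq: "0 < n \<Longrightarrow> x \<in> Tuniv k A \<Longrightarrow> cls n k A x = {y \<in> Tuniv k A. key n y = key n x}"
  by (auto simp: cls_def Heq_def approx_key Tuniv_def)

lemma cls_eq_iff: "0 < n \<Longrightarrow> x \<in> Tuniv k A \<Longrightarrow> y \<in> Tuniv k A \<Longrightarrow> cls n k A x = cls n k A y \<longleftrightarrow> key n x = key n y"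
  by (auto simp: cls_eq)

lemma cls_in: "x \<in> Tuniv k A \<Longrightarrow> cls n k A x \<in> Huniv n k A"
  by (auto simp: cls_def Huniv_def quotientI)

lemma Huniv_cls: "c \<in> Huniv n k A \<Longrightarrow> \<exists>x\<in>Tuniv k A. c = cls n k A x"
  by (auto simp: cls_def Huniv_def quotient_def)

lemma mem_cls: "0 < n \<Longrightarrow> c \<in> Huniv n k A \<Longrightarrow> y \<in> c \<Longrightarrow> c = cls n k A y \<and> y \<in> Tuniv k A"
proof -
  assume n: "0 < n" and c: "c \<in> Huniv n k A" and y: "y \<in> c"
  obtain x where x: "x \<in> Tuniv k A" "c = cls n k A x" using Huniv_cls[OF c] by blast
  have yT: "y \<in> Tuniv k A" "key n y = key n x" using y x cls_eq[OF n x(1)] by auto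
  then show ?thesis using x cls_eq_iff[OF n] by metis
qed

definition lastocc :: "('a \<times> nat) list \<Rightarrow> nat set" where
  "lastocc X = {l. 1 \<le> l \<and> l \<le> length X \<and> snd (X!(l-1)) \<notin> snd ` set (drop l X)}"

definition TT :: "nat \<Rightarrow> nat \<Rightarrow> 'a set \<Rightarrow> ('a \<times> nat) list list set" where
  "TT n k A = {P. vb n P \<and> set (concat P) \<subseteq> A \<times> {1..k}}"

definition bet :: "nat \<Rightarrow> nat \<Rightarrow> 'a set \<Rightarrow> ('a \<times> nat) list list \<Rightarrow> ('a \<times> nat) list set set" where
  "bet n k A P = (\<lambda>l. cls n k A (take l (concat P))) ` lastocc (concat P)"

definition gam :: "nat \<Rightarrow> nat \<Rightarrow> 'a set \<Rightarrow> ('a \<times> nat) list list \<Rightarrow> ('a \<times> nat) list set set" where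
  "gam n k A P = {cls n k A x | x. x \<in> Tuniv k A \<and> butlast (blocks n x) = P}"

lemma blocks_TT: "0 < n \<Longrightarrow> x \<in> Tuniv k A \<Longrightarrow> blocks n x \<in> TT n k A"
proof -
  assume n: "0 < n" and x: "x \<in> Tuniv k A"
  have "vb n (blocks n x)" "concat (blocks n x) = x" using blocks_vb[OF n] x by (auto simp: Tuniv_def)
  then show ?thesis using x unfolding TT_def Tuniv_def by (simp del: set_concat)
qed

lemma TT_take: "P \<in> TT n k A \<Longrightarrow> take j P \<in> TT n k A"
proof -
  assume P: "P \<in> TT n k A"
  have "set (concat (take j P)) \<subseteq> set (concat P)"
    by (metis append_take_drop_id concat_append set_append sup_ge1)
  moreover have "vb n (take j P)" using P vb_take by (auto simp: TT_def)
  ultimately show ?thesis using P unfolding TT_def by blast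
qed

lemma TT_butlast: "P \<in> TT n k A \<Longrightarrow> butlast P \<in> TT n k A"
  using TT_take[of P n k A "length P - 1"] by (simp add: butlast_conv_take)

lemma take_Tuniv: "P \<in> TT n k A \<Longrightarrow> 1 \<le> l \<Longrightarrow> l \<le> length (concat P) \<Longrightarrow> take l (concat P) \<in> Tuniv k A"
proof -
  assume P: "P \<in> TT n k A" and l: "1 \<le> l" "l \<le> length (concat P)"
  have "length (take l (concat P)) = l" using l by simp
  then have "take l (concat P) \<noteq> []" using l by (metis le_zero_eq list.size(3) one_neq_zero)
  moreover have "set (take l (concat P)) \<subseteq> A \<times> {1..k}"
    using P set_take_subset[of l "concat P"] unfolding TT_def by blast
  ultimately show ?thesis by (simp add: Tuniv_def)
qed

lemma nth_in_drop: "l \<le> p \<Longrightarrow> p < length X \<Longrightarrow> X!p \<in> set (drop l X)"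
proof -
  assume a: "l \<le> p" "p < length X"
  have "(drop l X)!(p-l) = X!p" using a by simp
  moreover have "p - l < length (drop l X)" using a by simp
  ultimately show ?thesis by (metis nth_mem)
qed

lemma lastocc_bnd: "l \<in> lastocc X \<Longrightarrow> 1 \<le> l \<and> l \<le> length X"
  by (simp add: lastocc_def)

lemma bet_sub: "P \<in> TT n k A \<Longrightarrow> bet n k A P \<subseteq> Huniv n k A"
  by (auto simp: bet_def intro!: cls_in take_Tuniv dest: lastocc_bnd)

lemma gam_sub: "gam n k A P \<subseteq> Huniv n k A"
  by (auto simp: gam_def intro!: cls_in)

lemma bet_key: assumes n: "0 < n" and P: "P \<in> TT n k A" and c: "c \<in> bet n k A P"
  and x: "x \<in> Tuniv k A" "c = cls n k A x"
  shows "\<exists>l j. l \<in> lastocc (concat P) \<and> j < length P \<and> Lp P j < l \<and> l \<le> Lp P (Suc j) \<and>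
     butlast (blocks n x) = take j P \<and> c = cls n k A (take l (concat P))"
proof -
  obtain l where l: "l \<in> lastocc (concat P)" "c = cls n k A (take l (concat P))"
    using c by (auto simp: bet_def)
  have lb: "1 \<le> l" "l \<le> length (concat P)" using lastocc_bnd[OF l(1)] by auto
  have vP: "vb n P" using P by (simp add: TT_def)
  obtain j where j: "j < length P" "Lp P j < l" "l \<le> Lp P (Suc j)"
    "butlast (blocks n (take l (concat P))) = take j P"
    using bprefix[OF n vP lb] by blast
  have "key n x = key n (take l (concat P))"
    using cls_eq_iff[OF n x(1) take_Tuniv[OF P lb]] x(2) l(2) by simp
  then have "butlast (blocks n x) = take j P" using j(4) by (simp add: key_def)
  then show ?thesis using l j by blast
qed

lemma gam_key: "0 < n \<Longrightarrow> c \<in> gam n k A Q \<Longrightarrow> x \<in> Tuniv k A \<Longrightarrow> c = cls n k A x \<Longrightarrow> butlast (blocks n x) = Q"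
  by (auto simp: gam_def cls_eq_iff key_def)

lemma gam_unique: "0 < n \<Longrightarrow> c \<in> gam n k A Q \<Longrightarrow> c \<in> gam n k A Q' \<Longrightarrow> Q = Q'"
  by (auto simp: gam_def cls_eq_iff key_def)

lemma bet_gam: assumes n: "0 < n" and P: "P \<in> TT n k A" and c: "c \<in> bet n k A P" "c \<in> gam n k A Q"
  shows "strict_prefix Q P"
proof -
  obtain x where x: "x \<in> Tuniv k A" "c = cls n k A x" "butlast (blocks n x) = Q"
    using c(2) by (auto simp: gam_def)
  obtain j where "j < length P" "butlast (blocks n x) = take j P"
    using bet_key[OF n P c(1) x(1,2)] by blast
  then show ?thesis using x(3)
    by (metis length_take min.absorb4 nat_less_le take_is_prefix prefix_order.le_imp_less_or_eq)
qed

lemma lastocc_inj: "inj_on (\<lambda>l. snd (X!(l-1))) (lastocc X)"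
proof (rule inj_onI)
  fix l1 l2 assume l1: "l1 \<in> lastocc X" and l2: "l2 \<in> lastocc X" and e: "snd (X!(l1-1)) = snd (X!(l2-1))"
  show "l1 = l2"
  proof (rule ccontr)
    assume "l1 \<noteq> l2"
    then consider "l1 < l2" | "l2 < l1" by linarith
    then show False
    proof cases
      case 1
      have "X!(l2-1) \<in> set (drop l1 X)" using 1 l2 lastocc_bnd[OF l1] lastocc_bnd[OF l2]
        by (intro nth_in_drop) auto
      then show False using l1 e by (force simp: lastocc_def)
    next
      case 2
      have "X!(l1-1) \<in> set (drop l2 X)" using 2 lastocc_bnd[OF l1] lastocc_bnd[OF l2]
        by (intro nth_in_drop) auto
      then have "snd (X!(l2-1)) \<in> snd ` set (drop l2 X)" using e by (metis image_eqI)
      then show False using l2 by (simp add: lastocc_def)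
    qed
  qed
qed

lemma lastocc_finite: "finite (lastocc X)"
  by (rule finite_subset[of _ "{..length X}"]) (auto simp: lastocc_def)

lemma lastocc_card: assumes "set X \<subseteq> A \<times> {1..k}" shows "card (lastocc X) \<le> k"
proof -
  have "(\<lambda>l. snd (X!(l-1))) ` lastocc X \<subseteq> {1..k}"
  proof
    fix p assume "p \<in> (\<lambda>l. snd (X!(l-1))) ` lastocc X"
    then obtain l where l: "l \<in> lastocc X" "p = snd (X!(l-1))" by blast
    have "X!(l-1) \<in> set X" using lastocc_bnd[OF l(1)] by (intro nth_mem) auto
    then show "p \<in> {1..k}" using assms l(2) by auto
  qed
  then have "card ((\<lambda>l. snd (X!(l-1))) ` lastocc X) \<le> k"
    by (metis card_atLeastAtMost card_mono finite_atLeastAtMost diff_Suc_1)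
  moreover have "card ((\<lambda>l. snd (X!(l-1))) ` lastocc X) = card (lastocc X)" by (rule card_image[OF lastocc_inj])
  ultimately show ?thesis by linarith
qed

lemma bet_finite: "finite (bet n k A P)"
  by (simp add: bet_def lastocc_finite)

lemma bet_card: "P \<in> TT n k A \<Longrightarrow> card (bet n k A P) \<le> k"
proof -
  assume P: "P \<in> TT n k A"
  have "card (bet n k A P) \<le> card (lastocc (concat P))" unfolding bet_def by (rule card_image_le[OF lastocc_finite])
  also have "\<dots> \<le> k" using P by (intro lastocc_card[of _ A]) (simp add: TT_def)
  finally show ?thesis .
qed

lemma TT_Nil: "[] \<in> TT n k A" by (simp add: TT_def)

lemma is_tree_TT: "is_tree (TT n k A) prefix"
  unfolding is_tree_def
proof (intro conjI)
  show "\<exists>r\<in>TT n k A. \<forall>t\<in>TT n k A. prefix r t" using TT_Nil[of n k A] Nil_prefix by blast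
  show "\<forall>t\<in>TT n k A. \<forall>x\<in>TT n k A. \<forall>y\<in>TT n k A. prefix x t \<and> prefix y t \<longrightarrow> prefix x y \<or> prefix y x"
    by (metis prefix_same_cases)
qed (auto intro: prefix_order.trans prefix_order.antisym)

lemma child_snoc: "tree_child (TT n k A) prefix t t' \<Longrightarrow> \<exists>b. t' = t @ [b]"
proof -
  assume c: "tree_child (TT n k A) prefix t t'"
  then have sp: "prefix t t'" "t \<noteq> t'" "t' \<in> TT n k A" by (auto simp: tree_child_def tree_less_def)
  obtain d where d: "t' = t @ d" using sp prefix_def by blast
  have dne: "d \<noteq> []" using d sp by auto
  show ?thesis
  proof (cases "length d = 1")
    case True then show ?thesis using d by (cases d) auto
  next
    case False
    define u where "u = take (Suc (length t)) t'"
    have "u \<in> TT n k A" using sp TT_take u_def by blast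
    moreover have "tree_less prefix t u" using d dne u_def
      by (cases d) (auto simp: tree_less_def)
    moreover have "tree_less prefix u t'"
    proof -
      have "length d \<ge> 2" using dne False by (cases d) (auto simp: Suc_le_eq)
      then have "length u < length t'" using d u_def by simp
      then show ?thesis using u_def by (auto simp: tree_less_def take_is_prefix)
    qed
    ultimately show ?thesis using c by (auto simp: tree_child_def)
  qed
qed

lemma snoc_child: "t \<in> TT n k A \<Longrightarrow> t @ [b] \<in> TT n k A \<Longrightarrow> tree_child (TT n k A) prefix t (t @ [b])"
  unfolding tree_child_def tree_less_def
  by (auto simp: prefix_snoc dest: prefix_order.antisym)

lemma gam_ne: assumes n: "0 < n" and k: "1 \<le> k" and A: "A \<noteq> {}" and t: "t \<in> TT n k A"
  shows "gam n k A t \<noteq> {}"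
proof -
  obtain a where a: "a \<in> A" using A by blast
  have vt: "vb n t" and st: "set (concat t) \<subseteq> A \<times> {1..k}" using t by (auto simp: TT_def)
  show ?thesis
  proof (cases "t = []")
    case True
    have v: "vb n [[(a,1::nat)]]" using n by (simp add: vb_def basic_def)
    have "blocks n [(a,1)] = [[(a,1)]]" using blocks_char[OF n v] by simp
    moreover have "[(a,1)] \<in> Tuniv k A" using a k by (simp add: Tuniv_def)
    ultimately show ?thesis using True by (auto simp: gam_def)
  next
    case False
    define i where "i = snd (last (last t))"
    have lt: "last t \<noteq> []" using vt False by (simp add: vb_def)
    have iin: "i \<in> snd ` set (last t)" using lt i_def by simp
    have "\<not> basic n (last t @ [(a,i)])" using iin by (auto simp: basic_def)
    then have v: "vb n (t @ [[(a,i)]])" using vb_snoc[OF vt, of "[(a,i)]"] n by (simp add: basic_def)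
    have "blocks n (concat t @ [(a,i)]) = t @ [[(a,i)]]" using blocks_char[OF n v] by simp
    moreover have "last (last t) \<in> set (concat t)" using lt False by (metis last_in_set set_concat UN_I)
    then have "i \<in> {1..k}" using st i_def by auto
    then have "concat t @ [(a,i)] \<in> Tuniv k A" using a st by (auto simp: Tuniv_def)
    ultimately show ?thesis by (auto simp: gam_def)
  qed
qed

lemma Huniv_gam: "0 < n \<Longrightarrow> c \<in> Huniv n k A \<Longrightarrow> \<exists>t\<in>TT n k A. c \<in> gam n k A t"
proof -
  assume n: "0 < n" and c: "c \<in> Huniv n k A"
  obtain x where x: "x \<in> Tuniv k A" "c = cls n k A x" using Huniv_cls[OF c] by blast
  have "butlast (blocks n x) \<in> TT n k A" using blocks_TT[OF n x(1)] TT_butlast by blast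
  moreover have "c \<in> gam n k A (butlast (blocks n x))" using x by (auto simp: gam_def)
  ultimately show ?thesis by blast
qed

lemma bet_gam_card: assumes n: "0 < n" and t': "t' \<in> TT n k A" and sp: "strict_prefix t t'"
  shows "card (bet n k A t' \<inter> gam n k A t) \<le> n"
proof -
  define X where "X = concat t'"
  define L where "L = Lp t' (length t)"
  have lt: "length t < length t'" using sp by (simp add: prefix_length_less)
  have tt: "take (length t) t' = t" using sp by (auto simp: strict_prefix_def prefix_def)
  have sub: "bet n k A t' \<inter> gam n k A t \<subseteq> (\<lambda>l. cls n k A (take l X)) ` {L<..L + length (t'!length t)}"
  proof
    fix c assume c: "c \<in> bet n k A t' \<inter> gam n k A t"
    obtain x where x: "x \<in> Tuniv k A" "c = cls n k A x" "butlast (blocks n x) = t"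
      using c by (auto simp: gam_def)
    obtain l j where lj: "j < length t'" "Lp t' j < l" "l \<le> Lp t' (Suc j)"
        "butlast (blocks n x) = take j t'" "c = cls n k A (take l (concat t'))"
      using bet_key[OF n t' _ x(1,2)] c by blast
    have "length (take j t') = length t" using lj(4) x(3) by simp
    then have "j = length t" using lj(1) by simp
    then show "c \<in> (\<lambda>l. cls n k A (take l X)) ` {L<..L + length (t'!length t)}"
      using lj Lp_Suc[OF lt] unfolding X_def L_def by auto
  qed
  have "card (bet n k A t' \<inter> gam n k A t) \<le> card ((\<lambda>l. cls n k A (take l X)) ` {L<..L + length (t'!length t)})"
    by (rule card_mono[OF _ sub]) simp
  also have "\<dots> \<le> card {L<..L + length (t'!length t)}" by (rule card_image_le) simp
  also have "\<dots> = length (t'!length t)" by simp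
  also have "\<dots> \<le> n" using t' lt by (auto simp: TT_def vb_def basic_def)
  finally show ?thesis .
qed

lemma child_bg: assumes n: "0 < n" and t: "t \<in> TT n k A" and tb: "t @ [b] \<in> TT n k A"
  shows "bet n k A (t @ [b]) \<inter> gam n k A t \<noteq> {}"
proof -
  define X where "X = concat (t @ [b])"
  have vb: "vb n (t @ [b])" using tb by (simp add: TT_def)
  have bne: "b \<noteq> []" using vb by (simp add: vb_def)
  have Xne: "X \<noteq> []" using bne X_def by simp
  have "length X \<in> lastocc X" using Xne by (simp add: lastocc_def Suc_leI)
  then have "cls n k A X \<in> bet n k A (t @ [b])" unfolding bet_def X_def by force
  moreover have "X \<in> Tuniv k A" using take_Tuniv[OF tb, of "length X"] Xne X_def by (simp add: Suc_leI)
  moreover have "butlast (blocks n X) = t" using blocks_char[OF n vb] X_def by simp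
  ultimately show ?thesis by (auto simp: gam_def)
qed

lemma lastocc_app: "l \<in> lastocc (X @ Y) \<Longrightarrow> l \<le> length X \<Longrightarrow> l \<in> lastocc X"
proof -
  assume l: "l \<in> lastocc (X @ Y)" and lx: "l \<le> length X"
  have l1: "1 \<le> l" using l by (simp add: lastocc_def)
  have "l - 1 < length X" using l1 lx by simp
  then have "(X @ Y)!(l-1) = X!(l-1)" by (simp add: nth_append)
  moreover have "set (drop l X) \<subseteq> set (drop l (X @ Y))" using lx by simp
  ultimately show ?thesis using l l1 lx by (auto simp: lastocc_def)
qed

lemma bet_down: assumes n: "0 < n" and t: "t0 @ [b] \<in> TT n k A"
  and c: "c \<in> bet n k A (t0 @ [b])" "c \<in> gam n k A P0" and ne: "P0 \<noteq> t0"
  shows "c \<in> bet n k A t0"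
proof -
  obtain x where x: "x \<in> Tuniv k A" "c = cls n k A x" "butlast (blocks n x) = P0"
    using c(2) by (auto simp: gam_def)
  obtain l j where lj: "l \<in> lastocc (concat (t0 @ [b]))" "j < length (t0 @ [b])"
     "Lp (t0 @ [b]) j < l" "l \<le> Lp (t0 @ [b]) (Suc j)"
     "butlast (blocks n x) = take j (t0 @ [b])" "c = cls n k A (take l (concat (t0 @ [b])))"
    using bet_key[OF n t c(1) x(1,2)] by blast
  have "j \<noteq> length t0" using lj(5) x(3) ne by auto
  then have sj: "Suc j \<le> length t0" using lj(2) by simp
  have "Lp (t0 @ [b]) (Suc j) \<le> Lp (t0 @ [b]) (length t0)" by (rule Lp_mono[OF sj])
  also have "\<dots> = length (concat t0)" by (simp add: Lp_def)
  finally have ll: "l \<le> length (concat t0)" using lj(4) by simp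
  have "l \<in> lastocc (concat t0)" using lastocc_app[of l "concat t0" b] lj(1) ll by simp
  moreover have "take l (concat (t0 @ [b])) = take l (concat t0)" using ll by simp
  ultimately show ?thesis using lj(6) by (auto simp: bet_def)
qed

lemma rtr_sym: assumes "\<And>u v. (u, v) \<in> E \<Longrightarrow> (v, u) \<in> E" and "(a, b) \<in> E\<^sup>*"
  shows "(b, a) \<in> E\<^sup>*"
  using assms(2)
proof (induction rule: rtrancl_induct)
  case base then show ?case by simp
next
  case (step y z)
  then show ?case using assms(1) by (meson converse_rtrancl_into_rtrancl)
qed

lemma connected_c: assumes n: "0 < n" and c: "c \<in> Huniv n k A"
  shows "tree_connected (TT n k A) prefix {t \<in> TT n k A. c \<in> bet n k A t \<union> gam n k A t}"
proof -
  define S where "S = {t \<in> TT n k A. c \<in> bet n k A t \<union> gam n k A t}"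
  define E where "E = {(u, v). u \<in> S \<and> v \<in> S \<and> (tree_child (TT n k A) prefix u v \<or> tree_child (TT n k A) prefix v u)}"
  obtain P0 where P0: "P0 \<in> TT n k A" "c \<in> gam n k A P0" using Huniv_gam[OF n c] by blast
  have P0S: "P0 \<in> S" using P0 by (simp add: S_def)
  have main: "t \<in> S \<Longrightarrow> (P0, t) \<in> E\<^sup>*" for t
  proof (induction t rule: rev_induct)
    case Nil
    have "lastocc ([]::('a \<times> nat) list) = {}" by (auto simp: lastocc_def)
    then have "c \<notin> bet n k A []" by (simp add: bet_def)
    then have "c \<in> gam n k A []" using Nil by (simp add: S_def)
    then have "P0 = []" using gam_unique[OF n P0(2)] by simp
    then show ?case by simp
  next
    case (snoc b t0)
    show ?case
    proof (cases "c \<in> gam n k A (t0 @ [b])")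
      case True
      then have "P0 = t0 @ [b]" using gam_unique[OF n P0(2)] by simp
      then show ?thesis by simp
    next
      case False
      then have cb: "c \<in> bet n k A (t0 @ [b])" and tT: "t0 @ [b] \<in> TT n k A" using snoc.prems by (auto simp: S_def)
      have t0T: "t0 \<in> TT n k A" using TT_butlast[OF tT] by simp
      have "c \<in> bet n k A t0 \<union> gam n k A t0"
      proof (cases "P0 = t0")
        case True then show ?thesis using P0 by simp
      next
        case False then show ?thesis using bet_down[OF n tT cb P0(2)] by simp
      qed
      then have t0S: "t0 \<in> S" using t0T by (simp add: S_def)
      then have "(P0, t0) \<in> E\<^sup>*" using snoc.IH by simp
      moreover have "(t0, t0 @ [b]) \<in> E" using t0S snoc.prems snoc_child[OF t0T tT] by (simp add: E_def)
      ultimately show ?thesis by (rule rtrancl_into_rtrancl)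
    qed
  qed
  have sym: "(u, v) \<in> E \<Longrightarrow> (v, u) \<in> E" for u v by (auto simp: E_def)
  have "\<forall>x\<in>S. \<forall>y\<in>S. (x, y) \<in> E\<^sup>*"
  proof (intro ballI)
    fix x y assume "x \<in> S" "y \<in> S"
    then have "(x, P0) \<in> E\<^sup>*" "(P0, y) \<in> E\<^sup>*" using main rtr_sym[OF sym] by blast+
    then show "(x, y) \<in> E\<^sup>*" by (rule rtrancl_trans)
  qed
  then show ?thesis unfolding tree_connected_def S_def[symmetric] E_def[symmetric] by (auto simp: S_def)
qed

lemma lastocc_chain: assumes y: "y \<noteq> []" "prefix y x"
  and pc: "\<forall>u. prefix y u \<and> prefix u x \<and> u \<noteq> y \<longrightarrow> snd (last u) \<noteq> snd (last y)"
  shows "length y \<in> lastocc x"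
proof (rule ccontr)
  assume nl: "length y \<notin> lastocc x"
  have ly: "1 \<le> length y" "length y \<le> length x" using y by (auto simp: Suc_le_eq prefix_length_le)
  then have "snd (x!(length y - 1)) \<in> snd ` set (drop (length y) x)" using nl by (simp add: lastocc_def)
  then obtain q where q: "q < length (drop (length y) x)" "snd ((drop (length y) x)!q) = snd (x!(length y - 1))"
    by (metis imageE in_set_conv_nth)
  define p where "p = length y + q"
  have p: "p < length x" "snd (x!p) = snd (x!(length y - 1))" using q ly p_def by auto
  define u where "u = take (Suc p) x"
  have yx: "y = take (length y) x" using y(2) by (metis append_eq_conv_conj prefix_def)
  have lu: "length u = Suc p" using p u_def by simp
  have "take (length y) u = take (length y) x" unfolding u_def using p_def by (simp add: min_def)
  then have "y = take (length y) u" using yx by simp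
  then have "prefix y u" by (metis take_is_prefix)
  moreover have "prefix u x" by (simp add: u_def take_is_prefix)
  moreover have "u \<noteq> y" using lu p_def by auto
  moreover have "snd (last u) = snd (last y)"
  proof -
    have "last u = x!p" using p u_def by (simp add: take_Suc_conv_app_nth)
    moreover have "last y = x!(length y - 1)"
    proof -
      have "last y = y!(length y - 1)" using y(1) by (simp add: last_conv_nth)
      also have "\<dots> = x!(length y - 1)" using yx ly by (metis diff_less nth_take zero_less_one less_le_trans)
      finally show ?thesis .
    qed
    ultimately show ?thesis using p by simp
  qed
  ultimately show False using pc by blast
qed

lemma rel_bet: assumes n: "0 < n" and cs: "cs \<in> Hrel n k A I R"
  shows "\<exists>t\<in>TT n k A. set cs \<subseteq> bet n k A t"
proof -
  obtain ss where ss: "ss \<in> Trel k A I R" "list_all2 (\<in>) ss cs" and csH: "set cs \<subseteq> Huniv n k A"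
    using cs by (auto simp: Hrel_def)
  have sT: "set ss \<subseteq> Tuniv k A" using ss(1) by (simp add: Trel_def)
  have chain: "\<forall>x\<in>set ss. \<forall>y\<in>set ss. prefix x y \<or> prefix y x" using ss(1) by (simp add: Trel_def)
  have peb: "\<forall>x\<in>set ss. \<forall>y\<in>set ss. prefix x y \<longrightarrow>
        (\<forall>u. prefix x u \<and> prefix u y \<and> u \<noteq> x \<longrightarrow> snd (last u) \<noteq> snd (last x))"
    using ss(1) by (simp add: Trel_def)
  show ?thesis
  proof (cases "ss = []")
    case True
    then have "cs = []" using ss(2) by simp
    then show ?thesis using TT_Nil by auto
  next
    case False
    define M where "M = Max (length ` set ss)"
    have "M \<in> length ` set ss" unfolding M_def using False by (intro Max_in) auto
    then obtain x where x: "x \<in> set ss" "length x = M" by blast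
    have xmax: "length y \<le> length x" if "y \<in> set ss" for y using that x M_def by simp
    have xT: "x \<in> Tuniv k A" using x sT by blast
    define P where "P = blocks n x"
    have PT: "P \<in> TT n k A" using blocks_TT[OF n xT] P_def by simp
    have cP: "concat P = x" using blocks_vb[OF n] xT P_def by (auto simp: Tuniv_def)
    have "set cs \<subseteq> bet n k A P"
    proof
      fix c assume c: "c \<in> set cs"
      then obtain i where i: "i < length cs" "c = cs!i" by (metis in_set_conv_nth)
      have li: "length ss = length cs" using ss(2) by (rule list_all2_lengthD)
      define y where "y = ss!i"
      have yin: "y \<in> set ss" using i li y_def by simp
      have "y \<in> c" using list_all2_nthD[OF ss(2)] i li y_def by simp
      then have cy: "c = cls n k A y" using mem_cls[OF n] csH c by blast
      have yT: "y \<in> Tuniv k A" using yin sT by blast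
      have pyx: "prefix y x"
      proof -
        have "prefix y x \<or> prefix x y" using chain yin x(1) by blast
        then show ?thesis
        proof
          assume "prefix x y"
          then obtain z where z: "y = x @ z" by (auto simp: prefix_def)
          then have "z = []" using xmax[OF yin] by simp
          then show ?thesis using z by simp
        qed
      qed
      have "length y \<in> lastocc x"
        by (rule lastocc_chain) (use yT pyx peb yin x(1) in \<open>auto simp: Tuniv_def\<close>)
      moreover have "y = take (length y) x" using pyx by (metis append_eq_conv_conj prefix_def)
      ultimately show "c \<in> bet n k A P" using cy cP unfolding bet_def by force
    qed
    then show ?thesis using PT by blast
  qed
qed

lemma distinct_nth_drop: "distinct xs \<Longrightarrow> i < length xs \<Longrightarrow> xs!i \<notin> set (drop (Suc i) xs)"
proof -
  assume d: "distinct xs" and i: "i < length xs"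
  have "distinct (take (Suc i) xs @ drop (Suc i) xs)" using d by simp
  then have "set (take (Suc i) xs) \<inter> set (drop (Suc i) xs) = {}" by (simp only: distinct_append)
  moreover have "xs!i \<in> set (take (Suc i) xs)" using i by (simp add: take_Suc_conv_app_nth)
  ultimately show ?thesis by blast
qed

lemma grand: assumes n: "0 < n" and T2: "(t @ [b]) @ [b'] \<in> TT n k A"
  and nk: "\<not> card (bet n k A (t @ [b])) < k"
  and nn: "card (bet n k A (t @ [b]) \<inter> gam n k A t) \<noteq> n"
  shows "(gam n k A t \<inter> bet n k A (t @ [b])) - bet n k A ((t @ [b]) @ [b']) \<noteq> {}"
proof -
  define t' where "t' = t @ [b]"
  define X where "X = concat t'"
  define L where "L = length (concat t)"
  define cl where "cl l = cls n k A (take l X)" for l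
  have T1: "t' \<in> TT n k A" using TT_butlast[OF T2] t'_def by (simp add: butlast_append)
  have v2: "vb n (t' @ [b'])" using T2 t'_def by (simp add: TT_def)
  have v1: "vb n t'" using T1 by (simp add: TT_def)
  have bb: "b \<noteq> []" "basic n b" using v1 t'_def by (auto simp: vb_def)
  have b'ne: "b' \<noteq> []" using v2 by (auto simp: vb_def)
  have XA: "set X \<subseteq> A \<times> {1..k}" using T1 X_def by (simp add: TT_def)
  have Xeq: "X = concat t @ b" using X_def t'_def by simp
  have lenX: "length X = L + length b" using Xeq L_def by simp
  have Lp1: "Lp t' (length t) = L" by (simp add: Lp_def t'_def L_def)
  have Lp2: "Lp t' (Suc (length t)) = length X" by (simp add: Lp_def t'_def X_def)
  have Lp1': "Lp (t' @ [b']) (length t) = L" by (simp add: Lp_def t'_def L_def)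
  have Lp2': "Lp (t' @ [b']) (Suc (length t)) = length X" by (simp add: Lp_def t'_def X_def)
  define Y1 where "Y1 = {L<..length X}"
  define Y2 where "Y2 = lastocc X \<inter> {..L}"
  have Y1occ: "Y1 \<subseteq> lastocc X"
  proof
    fix l assume l: "l \<in> Y1"
    then have l1: "L < l" "l \<le> length X" by (auto simp: Y1_def)
    define i where "i = l - 1 - L"
    have il: "i < length b" using l1 lenX i_def by simp
    have "\<not> l - 1 < length (concat t)" "l - 1 - length (concat t) = i" using l1 L_def i_def by auto
    then have "X!(l-1) = b!i" using Xeq by (simp only: nth_append if_False)
    moreover have "Suc i = l - L" using l1 i_def by simp
    then have "drop l X = drop (Suc i) b" using l1 Xeq L_def by simp
    moreover have "snd (b!i) \<notin> snd ` set (drop (Suc i) b)"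
    proof -
      have "(map snd b)!i \<notin> set (drop (Suc i) (map snd b))"
        using distinct_nth_drop[of "map snd b" i] bb(2) il by (simp add: basic_def)
      then show ?thesis using il by (simp add: drop_map)
    qed
    ultimately show "l \<in> lastocc X" using l1 by (simp add: lastocc_def)
  qed
  have betX: "bet n k A t' = cl ` lastocc X" by (simp add: bet_def cl_def X_def)
  have occ_sub: "lastocc X \<subseteq> Y1 \<union> Y2" by (auto simp: Y1_def Y2_def dest: lastocc_bnd)
  have fY1: "finite Y1" "finite Y2" using lastocc_finite[of X] by (auto simp: Y1_def Y2_def)
  have c1: "card (bet n k A t') \<le> card (cl ` Y1) + card Y2"
  proof -
    have "bet n k A t' \<subseteq> cl ` Y1 \<union> cl ` Y2" using betX occ_sub by auto
    then have "card (bet n k A t') \<le> card (cl ` Y1 \<union> cl ` Y2)" by (intro card_mono) (use fY1 in auto)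
    also have "\<dots> \<le> card (cl ` Y1) + card (cl ` Y2)" by (rule card_Un_le)
    also have "card (cl ` Y2) \<le> card Y2" by (rule card_image_le[OF fY1(2)])
    finally show ?thesis by simp
  qed
  have c2: "card Y1 + card Y2 \<le> k"
  proof -
    have "Y1 \<inter> Y2 = {}" by (auto simp: Y1_def Y2_def)
    then have "card Y1 + card Y2 = card (Y1 \<union> Y2)" using fY1 by (simp add: card_Un_disjoint)
    also have "\<dots> \<le> card (lastocc X)" using Y1occ by (intro card_mono[OF lastocc_finite]) (auto simp: Y2_def)
    also have "\<dots> \<le> k" by (rule lastocc_card[OF XA])
    finally show ?thesis .
  qed
  have cY1: "card Y1 = length b" using lenX by (simp add: Y1_def)
  have eqBG: "bet n k A t' \<inter> gam n k A t = cl ` Y1"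
  proof
    show "bet n k A t' \<inter> gam n k A t \<subseteq> cl ` Y1"
    proof
      fix c assume c: "c \<in> bet n k A t' \<inter> gam n k A t"
      obtain x where x: "x \<in> Tuniv k A" "c = cls n k A x" "butlast (blocks n x) = t"
        using c by (auto simp: gam_def)
      obtain l j where lj: "j < length t'" "Lp t' j < l" "l \<le> Lp t' (Suc j)"
          "butlast (blocks n x) = take j t'" "c = cls n k A (take l (concat t'))"
        using bet_key[OF n T1 _ x(1,2)] c by blast
      have "length (take j t') = length t" using lj(4) x(3) by simp
      then have "j = length t" using lj(1) by simp
      then show "c \<in> cl ` Y1" using lj Lp1 Lp2 unfolding Y1_def cl_def X_def by auto
    qed
  next
    show "cl ` Y1 \<subseteq> bet n k A t' \<inter> gam n k A t"
    proof
      fix c assume "c \<in> cl ` Y1"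
      then obtain l where l: "l \<in> Y1" "c = cl l" by blast
      have lb: "L < l" "l \<le> length X" using l by (auto simp: Y1_def)
      have "c \<in> bet n k A t'" using l Y1occ betX by auto
      moreover have "take l X \<in> Tuniv k A" using take_Tuniv[OF T1, of l] lb X_def by simp
      moreover have "butlast (blocks n (take l X)) = t"
        using blocks_take[OF n v1, of "length t" l] lb Lp1 Lp2 t'_def X_def by simp
      ultimately show "c \<in> bet n k A t' \<inter> gam n k A t" using l(2) cl_def by (auto simp: gam_def)
    qed
  qed
  have ci: "card (cl ` Y1) = card Y1"
  proof -
    have "k \<le> card (cl ` Y1) + card Y2" using nk c1 t'_def by simp
    then have "card Y1 \<le> card (cl ` Y1)" using c2 by simp
    moreover have "card (cl ` Y1) \<le> card Y1" by (rule card_image_le[OF fY1(1)])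
    ultimately show ?thesis by simp
  qed
  have inj: "inj_on cl Y1" by (rule eq_card_imp_inj_on[OF fY1(1) ci])
  have "length b \<noteq> n" using nn eqBG ci cY1 t'_def by simp
  then have bn: "length b < n" using bb(2) by (simp add: basic_def)
  have "\<not> basic n (b @ [hd b'])"
  proof -
    have "Suc (length t) < length (t' @ [b'])" by (simp add: t'_def)
    then have "\<not> basic n ((t' @ [b'])!(length t) @ [hd ((t' @ [b'])!Suc (length t))])"
      using v2 by (simp add: vb_def)
    then show ?thesis by (simp add: t'_def nth_append)
  qed
  then have "snd (hd b') \<in> set (map snd b)" using bn bb(2) by (auto simp: basic_def)
  then obtain q where q: "q < length b" "snd (b!q) = snd (hd b')" by (auto simp: in_set_conv_nth)
  define l0 where "l0 = L + Suc q"
  have l0Y: "l0 \<in> Y1" using q lenX by (simp add: Y1_def l0_def)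
  have c0: "cl l0 \<in> gam n k A t \<inter> bet n k A t'" using eqBG l0Y by blast
  have "cl l0 \<notin> bet n k A (t' @ [b'])"
  proof
    assume cb: "cl l0 \<in> bet n k A (t' @ [b'])"
    obtain x where x: "x \<in> Tuniv k A" "cl l0 = cls n k A x" "butlast (blocks n x) = t"
      using c0 by (auto simp: gam_def)
    obtain l j where lj: "l \<in> lastocc (concat (t' @ [b']))" "j < length (t' @ [b'])"
        "Lp (t' @ [b']) j < l" "l \<le> Lp (t' @ [b']) (Suc j)"
        "butlast (blocks n x) = take j (t' @ [b'])" "cl l0 = cls n k A (take l (concat (t' @ [b'])))"
      using bet_key[OF n _ cb x(1,2)] T2 t'_def by blast
    have "length (take j (t' @ [b'])) = length t" using lj(5) x(3) by simp
    then have jt: "j = length t" using lj(2) by (simp add: t'_def)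
    have lY: "l \<in> Y1" using lj(3,4) jt Lp1' Lp2' by (simp add: Y1_def)
    have X2: "concat (t' @ [b']) = X @ b'" by (simp add: X_def)
    have "take l (concat (t' @ [b'])) = take l X" using X2 lY by (simp add: Y1_def)
    then have "cl l = cl l0" using lj(6) by (simp add: cl_def)
    then have ll0: "l = l0" using inj lY l0Y by (simp add: inj_on_def)
    have "(X @ b')!(l0 - 1) = b!q" using q Xeq L_def l0_def by (simp add: nth_append)
    moreover have "(X @ b')!(length X) = hd b'" using b'ne by (simp add: nth_append hd_conv_nth)
    moreover have "(X @ b')!(length X) \<in> set (drop l0 (X @ b'))"
      using l0Y b'ne by (intro nth_in_drop) (auto simp: Y1_def)
    ultimately have "snd ((X @ b')!(l0 - 1)) \<in> snd ` set (drop l0 (X @ b'))" using q(2) by (metis image_eqI)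
    then show False using lj(1) ll0 X2 by (simp add: lastocc_def)
  qed
  then show ?thesis using c0 t'_def by blast
qed

theorem lemma4p8:
  fixes ar :: "'r \<Rightarrow> nat" and A :: "'a set" and I :: "'r \<Rightarrow> 'a list set" and n k :: nat
  assumes "0 < n" and "n \<le> k"
    and "finite A" and "A \<noteq> {}" and "sig_struct ar A I"
  shows "\<exists>(T :: ('a \<times> nat) list list set) le \<beta> \<gamma>.
           ext_tree_decomp (Huniv n k A) (Hrel n k A I) T le \<beta> \<gamma> \<and>
           etd_width_le T \<beta> k \<and>
           etd_arity_le T le \<beta> \<gamma> (Hrel n k A I) n \<and>
           structured n k (Huniv n k A) T le \<beta> \<gamma>"
proof -
  note n = assms(1)
  have k1: "1 \<le> k" using assms(1,2) by simp
  let ?T = "TT n k A" and ?b = "bet n k A" and ?g = "gam n k A"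
  have E: "ext_tree_decomp (Huniv n k A) (Hrel n k A I) ?T prefix ?b ?g"
    unfolding ext_tree_decomp_def tree_decomp_def
  proof (intro conjI ballI allI impI)
    show "\<And>t. t \<in> ?T \<Longrightarrow> ?b t \<subseteq> Huniv n k A" by (rule bet_sub)
    show "\<And>t. t \<in> ?T \<Longrightarrow> ?g t \<subseteq> Huniv n k A" by (rule gam_sub)
    show "is_tree ?T prefix" by (rule is_tree_TT)
    show "\<And>t. t \<in> ?T \<Longrightarrow> ?b t \<union> ?g t \<subseteq> Huniv n k A" using bet_sub gam_sub by blast
    show "\<And>c. c \<in> Huniv n k A \<Longrightarrow> \<exists>t\<in>?T. c \<in> ?b t \<union> ?g t" using Huniv_gam[OF n] by blast
    show "\<And>c. c \<in> Huniv n k A \<Longrightarrow> tree_connected ?T prefix {t \<in> ?T. c \<in> ?b t \<union> ?g t}"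
      by (rule connected_c[OF n])
    show "\<And>R cs. cs \<in> Hrel n k A I R \<Longrightarrow> \<exists>t\<in>?T. set cs \<subseteq> ?b t \<union> ?g t"
      using rel_bet[OF n] by (meson le_supI1)
    show "\<And>t t' c. t \<in> ?T \<Longrightarrow> t' \<in> ?T \<Longrightarrow> c \<in> ?g t \<and> c \<in> ?b t' \<union> ?g t' \<Longrightarrow> prefix t t'"
      using gam_unique[OF n] bet_gam[OF n] by (metis Un_iff prefix_order.order_refl strict_prefix_def)
  qed
  have W: "etd_width_le ?T ?b k" unfolding etd_width_le_def using bet_finite bet_card by blast
  define Wd where "Wd = etd_width ?T ?b"
  have fin: "finite ((\<lambda>t. card (?b t)) ` ?T)"
    by (rule finite_subset[of _ "{..k}"]) (use bet_card in auto)
  have leW: "t \<in> ?T \<Longrightarrow> card (?b t) \<le> Wd" for t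
    unfolding Wd_def etd_width_def by (rule Max_ge[OF fin]) simp
  have AR: "etd_arity_le ?T prefix ?b ?g (Hrel n k A I) n"
    unfolding etd_arity_le_def
  proof (intro exI[of _ "min n Wd"] conjI)
    show "min n Wd \<le> n" by simp
    show "min n Wd \<le> etd_width ?T ?b" by (simp add: Wd_def)
    show "arity_cond ?T prefix ?b ?g (Hrel n k A I) (min n Wd)"
      unfolding arity_cond_def
    proof (intro conjI ballI allI impI)
      fix t t' assume t: "t \<in> ?T" and t': "t' \<in> ?T" and lt: "tree_less prefix t t'"
      have "strict_prefix t t'" using lt by (simp add: tree_less_def strict_prefix_def)
      then have "card (?b t' \<inter> ?g t) \<le> n" by (rule bet_gam_card[OF n t'])
      moreover have "card (?b t' \<inter> ?g t) \<le> card (?b t')" by (intro card_mono bet_finite) auto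
      ultimately show "card (?b t' \<inter> ?g t) \<le> min n Wd" using leW[OF t'] by simp
    next
      fix R cs assume cs: "cs \<in> Hrel n k A I R"
      obtain t where t: "t \<in> ?T" "set cs \<subseteq> ?b t" using rel_bet[OF n cs] by blast
      have "set cs \<inter> ?g t = {}"
      proof (rule ccontr)
        assume "set cs \<inter> ?g t \<noteq> {}"
        then obtain c where "c \<in> ?b t" "c \<in> ?g t" using t by blast
        then have "strict_prefix t t" using bet_gam[OF n t(1)] by blast
        then show False by simp
      qed
      then show "\<exists>t\<in>?T. set cs \<subseteq> ?b t \<union> ?g t \<and> card (set cs \<inter> ?g t) \<le> min n Wd"
        using t by auto
    qed
  qed
  have S: "structured n k (Huniv n k A) ?T prefix ?b ?g"
    unfolding structured_def
  proof (intro conjI ballI allI impI)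
    show "\<And>c. c \<in> Huniv n k A \<Longrightarrow> \<exists>t\<in>?T. c \<in> ?g t" using Huniv_gam[OF n] by blast
    show "\<And>t. t \<in> ?T \<Longrightarrow> ?g t \<noteq> {}" using gam_ne[OF n k1 assms(4)] by blast
    fix t t'
    assume c: "tree_child ?T prefix t t'"
    then obtain b where b: "t' = t @ [b]" using child_snoc by blast
    have "t \<in> ?T" "t' \<in> ?T" using c by (auto simp: tree_child_def)
    then show "?b t' \<inter> ?g t \<noteq> {}" using child_bg[OF n] b by blast
  next
    fix t t' t''
    assume c: "tree_child ?T prefix t t' \<and> tree_child ?T prefix t' t''"
    then obtain b b' where b: "t' = t @ [b]" "t'' = t' @ [b']" using child_snoc by blast
    have T2: "t'' \<in> ?T" using c by (auto simp: tree_child_def)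
    show "card (?b t' \<inter> ?g t) = n \<or> card (?b t') < k \<or> (?g t \<inter> ?b t') - ?b t'' \<noteq> {}"
      using grand[OF n, of t b b' k A] T2 b by blast
  qed
  show ?thesis using E W AR S by blast
qed

end
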